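(* Let $r\ge 2$ be a constant. For $n\ge 2r$ define $\mathrm{Fork}_{n,r}:\{0,1\}^n\to\mathbb{R}$ by $\mathrm{Fork}_{n,r}(x)=n+1$ if $x=0^r1^{n-r}$, $\mathrm{Fork}_{n,r}(x)=n+2$ if $x=1^{n-r}0^r$, and $\mathrm{Fork}_{n,r}(x)=|x|_1$ (the number of ones in $x$) otherwise. Consider the function class $\mathcal{F}_{n,r}=\{\mathrm{Fork}_{n,r}\circ\sigma : \sigma \text{ an automorphism of the hypercube } \{0,1\}^n\}$. Then the unrestricted black-box complexity of $\mathcal{F}_{n,r}$ is $\Theta(n^r)$.
   Context: The unrestricted black-box complexity of a function class $\mathcal{F}$ is the minimum, over all (randomized) black-box algorithms $A$, of the maximum over $f\in\mathcal{F}$ of the expected number of function evaluations $A$ makes until it queries an optimum of $f$; the algorithm may choose its queries depending on all previously queried points and their function values. *)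

theory Defs
  imports "HOL-Probability.Probability"
begin

definition cube :: "nat \<Rightarrow> bool list set" where
  "cube n = {x. length x = n}"

definition hc_adj :: "bool list \<Rightarrow> bool list \<Rightarrow> bool" where
  "hc_adj x y \<longleftrightarrow> length x = length y \<and> card {i. i < length x \<and> x ! i \<noteq> y ! i} = 1"

definition hypercube_aut :: "nat \<Rightarrow> (bool list \<Rightarrow> bool list) \<Rightarrow> bool" where
  "hypercube_aut n \<sigma> \<longleftrightarrow> bij_betw \<sigma> (cube n) (cube n) \<and>
     (\<forall>x\<in>cube n. \<forall>y\<in>cube n. hc_adj x y \<longleftrightarrow> hc_adj (\<sigma> x) (\<sigma> y))"

definition ones :: "bool list \<Rightarrow> nat" where
  "ones x = length (filter id x)"

definition Fork :: "nat \<Rightarrow> nat \<Rightarrow> bool list \<Rightarrow> real" where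
  "Fork n r x =
     (if x = replicate r False @ replicate (n - r) True then real n + 1
      else if x = replicate (n - r) True @ replicate r False then real n + 2
      else real (ones x))"

definition Fork_class :: "nat \<Rightarrow> nat \<Rightarrow> (bool list \<Rightarrow> real) set" where
  "Fork_class n r = {(\<lambda>x. Fork n r (\<sigma> x)) | \<sigma>. hypercube_aut n \<sigma>}"

text \<open>A history is the list of queried points with their function values.
  A randomized black-box algorithm maps every history to a distribution of the next query.\<close>
type_synonym history = "(bool list \<times> real) list"
type_synonym bb_alg = "history \<Rightarrow> bool list pmf"

definition valid_alg :: "nat \<Rightarrow> bb_alg \<Rightarrow> bool" where
  "valid_alg n A \<longleftrightarrow> (\<forall>h. set_pmf (A h) \<subseteq> cube n)"

fun run :: "bb_alg \<Rightarrow> (bool list \<Rightarrow> real) \<Rightarrow> nat \<Rightarrow> history pmf" where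
  "run A f 0 = return_pmf []"
| "run A f (Suc t) = bind_pmf (run A f t) (\<lambda>h. map_pmf (\<lambda>x. h @ [(x, f x)]) (A h))"

definition is_opt :: "nat \<Rightarrow> (bool list \<Rightarrow> real) \<Rightarrow> bool list \<Rightarrow> bool" where
  "is_opt n f x \<longleftrightarrow> x \<in> cube n \<and> (\<forall>y\<in>cube n. f y \<le> f x)"

text \<open>Expected number of evaluations until an optimum is queried:
  E[T] = sum over t of P(T > t), where T > t iff none of the first t queries is optimal.\<close>
definition expected_opt_time :: "nat \<Rightarrow> bb_alg \<Rightarrow> (bool list \<Rightarrow> real) \<Rightarrow> ennreal" where
  "expected_opt_time n A f =
     (\<Sum>t. ennreal (measure_pmf.prob (run A f t) {h. \<forall>p\<in>set h. \<not> is_opt n f (fst p)}))"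

definition bb_complexity :: "nat \<Rightarrow> (bool list \<Rightarrow> real) set \<Rightarrow> ennreal" where
  "bb_complexity n F = (INF A\<in>{A. valid_alg n A}. SUP f\<in>F. expected_opt_time n A f)"

end

theory Submission
  imports Defs
begin


definition hdist :: "bool list \<Rightarrow> bool list \<Rightarrow> nat" where
  "hdist x y = card {i. i < length x \<and> x ! i \<noteq> y ! i}"

lemma hdist_sym: "length x = length y \<Longrightarrow> hdist x y = hdist y x"
  unfolding hdist_def by (metis (mono_tags, lifting))

lemma hdist_triangle:
  assumes "length x = length y" "length y = length z"
  shows "hdist x z \<le> hdist x y + hdist y z"
proof -
  have "{i. i < length x \<and> x ! i \<noteq> z ! i} \<subseteq> {i. i < length x \<and> x ! i \<noteq> y ! i} \<union> {i. i < length y \<and> y ! i \<noteq> z ! i}"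
    using assms by auto
  then have "card {i. i < length x \<and> x ! i \<noteq> z ! i} \<le> card ({i. i < length x \<and> x ! i \<noteq> y ! i} \<union> {i. i < length y \<and> y ! i \<noteq> z ! i})"
    by (intro card_mono) auto
  also have "\<dots> \<le> card {i. i < length x \<and> x ! i \<noteq> y ! i} + card {i. i < length y \<and> y ! i \<noteq> z ! i}"
    by (rule card_Un_le)
  finally show ?thesis unfolding hdist_def .
qed

lemma hdist_zero: "length x = length y \<Longrightarrow> hdist x y = 0 \<Longrightarrow> x = y"
  unfolding hdist_def by (auto intro: nth_equalityI)

lemma hdist_self: "hdist x x = 0"
  unfolding hdist_def by simp

lemma adj_hdist: "hc_adj x y \<longleftrightarrow> length x = length y \<and> hdist x y = 1"
  unfolding hc_adj_def hdist_def by simp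

lemma aut_cube: "hypercube_aut n \<sigma> \<Longrightarrow> x \<in> cube n \<Longrightarrow> \<sigma> x \<in> cube n"
  unfolding hypercube_aut_def bij_betw_def by auto

lemma aut_inv:
  assumes "hypercube_aut n \<sigma>"
  shows "hypercube_aut n (inv_into (cube n) \<sigma>)"
proof -
  have b: "bij_betw \<sigma> (cube n) (cube n)" and a: "\<forall>x\<in>cube n. \<forall>y\<in>cube n. hc_adj x y \<longleftrightarrow> hc_adj (\<sigma> x) (\<sigma> y)"
    using assms unfolding hypercube_aut_def by auto
  have bi: "bij_betw (inv_into (cube n) \<sigma>) (cube n) (cube n)"
    using b by (rule bij_betw_inv_into)
  have "hc_adj x y \<longleftrightarrow> hc_adj (inv_into (cube n) \<sigma> x) (inv_into (cube n) \<sigma> y)"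
    if "x \<in> cube n" "y \<in> cube n" for x y
  proof -
    have "inv_into (cube n) \<sigma> x \<in> cube n" "inv_into (cube n) \<sigma> y \<in> cube n"
      using bi that unfolding bij_betw_def by auto
    moreover have "\<sigma> (inv_into (cube n) \<sigma> x) = x" "\<sigma> (inv_into (cube n) \<sigma> y) = y"
      using b that by (auto simp: bij_betw_def f_inv_into_f)
    ultimately show ?thesis using a by metis
  qed
  then show ?thesis using bi unfolding hypercube_aut_def by auto
qed

lemma aut_le:
  assumes "hypercube_aut n \<sigma>"
  shows "x \<in> cube n \<Longrightarrow> y \<in> cube n \<Longrightarrow> hdist (\<sigma> x) (\<sigma> y) \<le> hdist x y"
proof (induction "hdist x y" arbitrary: x)
  case 0
  then have "x = y" using hdist_zero[of x y] by (auto simp: cube_def)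
  then show ?case by (simp add: hdist_self)
next
  case (Suc k)
  then have "{i. i < length x \<and> x ! i \<noteq> y ! i} \<noteq> {}"
    unfolding hdist_def by (metis card.empty nat.distinct(1))
  then obtain i where i: "i < length x" "x ! i \<noteq> y ! i" by auto
  define x' where "x' = x[i := y ! i]"
  have lx: "length x = n" "length y = n" using Suc.prems by (auto simp: cube_def)
  have x'c: "x' \<in> cube n" using lx by (simp add: x'_def cube_def)
  have "{j. j < length x \<and> x ! j \<noteq> y ! j} = insert i {j. j < length x' \<and> x' ! j \<noteq> y ! j}"
    using i by (auto simp: x'_def nth_list_update)
  moreover have "i \<notin> {j. j < length x' \<and> x' ! j \<noteq> y ! j}" by (simp add: x'_def)
  ultimately have "hdist x y = Suc (hdist x' y)"
    unfolding hdist_def by simp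
  then have k: "k = hdist x' y" using Suc.hyps(2) by simp
  have "{j. j < length x \<and> x ! j \<noteq> x' ! j} = {i}"
    using i by (auto simp: x'_def nth_list_update)
  then have "hc_adj x x'" unfolding hc_adj_def by (simp add: x'_def)
  then have "hc_adj (\<sigma> x) (\<sigma> x')" using assms Suc.prems x'c unfolding hypercube_aut_def by blast
  then have d1: "hdist (\<sigma> x) (\<sigma> x') = 1" by (simp add: adj_hdist)
  have d2: "hdist (\<sigma> x') (\<sigma> y) \<le> k" using Suc.hyps(1)[OF k x'c Suc.prems(2)] k by simp
  have c: "\<sigma> x \<in> cube n" "\<sigma> x' \<in> cube n" "\<sigma> y \<in> cube n"
    using aut_cube[OF assms] Suc.prems x'c by auto
  have "hdist (\<sigma> x) (\<sigma> y) \<le> hdist (\<sigma> x) (\<sigma> x') + hdist (\<sigma> x') (\<sigma> y)"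
    using c by (intro hdist_triangle) (auto simp: cube_def)
  then show ?case using d1 d2 Suc.hyps(2) by simp
qed

lemma aut_hdist:
  assumes "hypercube_aut n \<sigma>" "x \<in> cube n" "y \<in> cube n"
  shows "hdist (\<sigma> x) (\<sigma> y) = hdist x y"
proof -
  let ?t = "inv_into (cube n) \<sigma>"
  have b: "bij_betw \<sigma> (cube n) (cube n)" using assms unfolding hypercube_aut_def by auto
  have "hdist (?t (\<sigma> x)) (?t (\<sigma> y)) \<le> hdist (\<sigma> x) (\<sigma> y)"
    using aut_le[OF aut_inv[OF assms(1)]] aut_cube[OF assms(1)] assms(2,3) by blast
  moreover have "?t (\<sigma> x) = x" "?t (\<sigma> y) = y"
    using b assms(2,3) by (auto simp: bij_betw_def)
  ultimately show ?thesis using aut_le[OF assms] by (metis le_antisym)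
qed



definition sp1 :: "nat \<Rightarrow> nat \<Rightarrow> bool list" where
  "sp1 n r = replicate r False @ replicate (n - r) True"
definition sp2 :: "nat \<Rightarrow> nat \<Rightarrow> bool list" where
  "sp2 n r = replicate (n - r) True @ replicate r False"

lemma len_sp: "r \<le> n \<Longrightarrow> length (sp1 n r) = n" "r \<le> n \<Longrightarrow> length (sp2 n r) = n"
  by (auto simp: sp1_def sp2_def)

lemma nth_sp1: "r \<le> n \<Longrightarrow> i < n \<Longrightarrow> sp1 n r ! i = (r \<le> i)"
  by (auto simp: sp1_def nth_append)
lemma nth_sp2: "r \<le> n \<Longrightarrow> i < n \<Longrightarrow> sp2 n r ! i = (i < n - r)"
  by (auto simp: sp2_def nth_append)

lemma sp_neq: "1 \<le> r \<Longrightarrow> r < n \<Longrightarrow> sp1 n r \<noteq> sp2 n r"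
proof
  assume "1 \<le> r" "r < n" "sp1 n r = sp2 n r"
  then have "sp1 n r ! 0 = sp2 n r ! 0" by simp
  with \<open>1 \<le> r\<close> \<open>r < n\<close> show False by (simp add: nth_sp1 nth_sp2)
qed

lemma ones_card: "ones y = card {i. i < length y \<and> y ! i}"
  unfolding ones_def by (simp add: length_filter_conv_card)

lemma ones_le: "ones y \<le> length y"
  unfolding ones_def by simp

lemma ones_hdist: "ones y + hdist y (replicate (length y) True) = length y"
proof -
  have "{i. i < length y \<and> y ! i} \<union> {i. i < length y \<and> y ! i \<noteq> replicate (length y) True ! i} = {..<length y}"
    by auto
  moreover have "{i. i < length y \<and> y ! i} \<inter> {i. i < length y \<and> y ! i \<noteq> replicate (length y) True ! i} = {}"
    by auto
  ultimately show ?thesis unfolding ones_card hdist_def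
    by (metis (no_types, lifting) card_Un_disjoint card_lessThan finite_Un finite_lessThan)
qed

lemma hdist_sp1: "r \<le> n \<Longrightarrow> hdist (sp1 n r) (replicate n True) = r"
proof -
  assume "r \<le> n"
  then have "{i. i < length (sp1 n r) \<and> sp1 n r ! i \<noteq> replicate n True ! i} = {..<r}"
    by (auto simp: len_sp nth_sp1)
  then show ?thesis unfolding hdist_def by simp
qed

lemma hdist_sp2: "r \<le> n \<Longrightarrow> hdist (sp2 n r) (replicate n True) = r"
proof -
  assume "r \<le> n"
  then have "{i. i < length (sp2 n r) \<and> sp2 n r ! i \<noteq> replicate n True ! i} = {n-r..<n}"
    by (auto simp: len_sp nth_sp2)
  then show ?thesis unfolding hdist_def using \<open>r \<le> n\<close> by simp
qed

lemma Fork_eq: "Fork n r x = (if x = sp1 n r then real n + 1 else if x = sp2 n r then real n + 2 else real (ones x))"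
  unfolding Fork_def sp1_def sp2_def by simp

lemma Fork_le: "length y = n \<Longrightarrow> Fork n r y \<le> real n + 2"
  using ones_le[of y] unfolding Fork_eq by auto

lemma Fork_sp2: "1 \<le> r \<Longrightarrow> r < n \<Longrightarrow> Fork n r (sp2 n r) = real n + 2"
  using sp_neq[of r n] unfolding Fork_eq by auto

lemma Fork_top: "length y = n \<Longrightarrow> Fork n r y \<ge> real n + 2 \<Longrightarrow> y = sp2 n r"
  using ones_le[of y] unfolding Fork_eq by (auto split: if_splits)



definition Dv :: "nat \<Rightarrow> nat \<Rightarrow> real \<Rightarrow> real" where
  "Dv n r v = (if v = real n + 1 then real r else real n - v)"

definition ev :: "nat \<Rightarrow> nat \<Rightarrow> bool list" where
  "ev n i = (replicate n False)[i := True]"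

definition alg_next :: "nat \<Rightarrow> nat \<Rightarrow> history \<Rightarrow> bool list" where
  "alg_next n r h = (let k = length h in
     if k = 0 then replicate n False
     else if k \<le> n then ev n (k - 1)
     else (let z = map (\<lambda>i. Dv n r (snd (h ! (i + 1))) < Dv n r (snd (h ! 0))) [0..<n];
               L = filter (\<lambda>y. hdist y z = r) (List.n_lists n [True, False]);
               m = k - (n + 1)
           in if m < length L then L ! m else replicate n False))"

definition alg :: "nat \<Rightarrow> nat \<Rightarrow> bb_alg" where
  "alg n r = (\<lambda>h. return_pmf (alg_next n r h))"

lemma nth_filter_nlists: "m < length (filter P (List.n_lists n xs)) \<Longrightarrow> length (filter P (List.n_lists n xs) ! m) = n"
  by (metis filter_is_subset length_n_lists_elem nth_mem subsetD)

lemma finite_cube: "finite (cube n)"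
proof -
  have "cube n \<subseteq> {xs. set xs \<subseteq> (UNIV :: bool set) \<and> length xs = n}" by (auto simp: cube_def)
  moreover have "finite {xs. set xs \<subseteq> (UNIV :: bool set) \<and> length xs = n}"
    by (rule finite_lists_length_eq) simp
  ultimately show ?thesis by (rule finite_subset)
qed

lemma alg_next_cube: "alg_next n r h \<in> cube n"
  by (auto simp: alg_next_def Let_def cube_def ev_def nth_filter_nlists simp del: filter.simps)

lemma valid_alg: "valid_alg n (alg n r)"
  unfolding valid_alg_def alg_def using alg_next_cube by auto

primrec HH :: "nat \<Rightarrow> nat \<Rightarrow> (bool list \<Rightarrow> real) \<Rightarrow> nat \<Rightarrow> history" where
  "HH n r f 0 = []"
| "HH n r f (Suc t) = HH n r f t @ [(alg_next n r (HH n r f t), f (alg_next n r (HH n r f t)))]"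

lemma run_alg: "run (alg n r) f t = return_pmf (HH n r f t)"
  by (induction t) (auto simp: alg_def map_return_pmf bind_return_pmf)

lemma HH_len: "length (HH n r f t) = t"
  by (induction t) auto

lemma HH_nth: "i < t \<Longrightarrow> HH n r f t ! i = (alg_next n r (HH n r f i), f (alg_next n r (HH n r f i)))"
proof (induction t)
  case 0 then show ?case by simp
next
  case (Suc t)
  then show ?case by (cases "i < t") (auto simp: nth_append HH_len less_Suc_eq)
qed

lemma hdist_ev:
  assumes "length z = n" "i < n"
  shows "hdist (ev n i) z < hdist (replicate n False) z \<longleftrightarrow> z ! i"
proof -
  let ?A = "{j. j < n \<and> z ! j}"
  have A: "{j. j < length (replicate n False) \<and> replicate n False ! j \<noteq> z ! j} = ?A" by auto
  have fA: "finite ?A" by simp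
  show ?thesis
  proof (cases "z ! i")
    case True
    then have "{j. j < length (ev n i) \<and> ev n i ! j \<noteq> z ! j} = ?A - {i}"
      using assms by (auto simp: ev_def nth_list_update)
    moreover have "i \<in> ?A" using True assms by simp
    ultimately show ?thesis unfolding hdist_def A using True fA
      by (metis (no_types, lifting) card_Diff1_less)
  next
    case False
    then have "{j. j < length (ev n i) \<and> ev n i ! j \<noteq> z ! j} = insert i ?A"
      using assms by (auto simp: ev_def nth_list_update)
    moreover have "i \<notin> ?A" using False by simp
    ultimately show ?thesis unfolding hdist_def A using False fA by simp
  qed
qed

lemma sphere_card:
  assumes "length z = n"
  shows "card {y. y \<in> cube n \<and> hdist y z = r} \<le> n choose r"
proof -
  let ?g = "\<lambda>y. {i. i < n \<and> y ! i \<noteq> z ! i}"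
  have "inj_on ?g {y. y \<in> cube n \<and> hdist y z = r}"
  proof (rule inj_onI)
    fix x y assume x: "x \<in> {y. y \<in> cube n \<and> hdist y z = r}" and y: "y \<in> {y. y \<in> cube n \<and> hdist y z = r}"
      and e: "?g x = ?g y"
    show "x = y"
    proof (rule nth_equalityI)
      show "length x = length y" using x y by (simp add: cube_def)
      fix i assume "i < length x"
      then have "i < n" using x by (simp add: cube_def)
      then have "(x ! i \<noteq> z ! i) = (y ! i \<noteq> z ! i)" using e by blast
      then show "x ! i = y ! i" by blast
    qed
  qed
  moreover have "?g ` {y. y \<in> cube n \<and> hdist y z = r} \<subseteq> {S. S \<subseteq> {..<n} \<and> card S = r}"
    by (auto simp: hdist_def cube_def)
  ultimately have "card {y. y \<in> cube n \<and> hdist y z = r} \<le> card {S. S \<subseteq> {..<n} \<and> card S = r}"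
    by (intro card_inj_on_le) auto
  then show ?thesis by (simp add: n_subsets)
qed

lemma upper_found:
  assumes aut: "hypercube_aut n \<sigma>" and f: "f = (\<lambda>x. Fork n r (\<sigma> x))"
    and r: "1 \<le> r" "r < n" and t: "n + 1 + (n choose r) \<le> t"
  shows "\<exists>p\<in>set (HH n r f t). is_opt n f (fst p)"
proof -
  have b: "bij_betw \<sigma> (cube n) (cube n)" using aut unfolding hypercube_aut_def by auto
  have "replicate n True \<in> cube n" "sp2 n r \<in> cube n" using r by (auto simp: cube_def len_sp)
  then obtain z s2 where z: "z \<in> cube n" "\<sigma> z = replicate n True" and s2: "s2 \<in> cube n" "\<sigma> s2 = sp2 n r"
    using b unfolding bij_betw_def by (metis imageE)
  have inj: "inj_on \<sigma> (cube n)" using b by (simp add: bij_betw_def)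
  have opt: "is_opt n f s2"
    unfolding is_opt_def using s2 Fork_sp2[OF r] Fork_le aut_cube[OF aut]
    by (auto simp: f cube_def)
  have D: "Dv n r (f x) = real (hdist x z)" if x: "x \<in> cube n" "x \<noteq> s2" for x
  proof -
    have sx: "\<sigma> x \<in> cube n" using aut_cube[OF aut x(1)] .
    have hz: "hdist x z = hdist (\<sigma> x) (replicate n True)"
      using aut_hdist[OF aut x(1) z(1)] z(2) by simp
    have ne2: "\<sigma> x \<noteq> sp2 n r" using inj x s2 by (metis inj_on_def)
    show ?thesis
    proof (cases "\<sigma> x = sp1 n r")
      case True
      then show ?thesis using hz hdist_sp1[of r n] r by (simp add: f Fork_eq Dv_def)
    next
      case False
      have "ones (\<sigma> x) + hdist (\<sigma> x) (replicate n True) = n"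
        using ones_hdist[of "\<sigma> x"] sx by (simp add: cube_def)
      moreover have "real (ones (\<sigma> x)) \<noteq> real n + 1" using ones_le[of "\<sigma> x"] sx by (simp add: cube_def)
      ultimately show ?thesis using False ne2 hz by (simp add: f Fork_eq Dv_def)
    qed
  qed
  let ?Q = "\<lambda>i. alg_next n r (HH n r f i)"
  have memQ: "(?Q j, f (?Q j)) \<in> set (HH n r f t)" if "j < t" for j
    using HH_nth[OF that] HH_len[of n r f t] that by (metis nth_mem)
  show ?thesis
  proof (cases "\<exists>j\<le>n. ?Q j = s2")
    case True
    then obtain j where "j \<le> n" "?Q j = s2" by auto
    then show ?thesis using memQ[of j] t opt by (intro bexI[of _ "(?Q j, f (?Q j))"]) auto
  next
    case False
    have Q0: "?Q 0 = replicate n False" by (simp add: alg_next_def)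
    have Qi: "?Q (Suc i) = ev n i" if "i < n" for i
      using that by (simp add: alg_next_def HH_len Let_def)
    have Qc: "?Q j \<in> cube n" for j by (rule alg_next_cube)
    define L where "L = filter (\<lambda>y. hdist y z = r) (List.n_lists n [True, False])"
    have zc: "map (\<lambda>i. Dv n r (snd (HH n r f k ! (i + 1))) < Dv n r (snd (HH n r f k ! 0))) [0..<n] = z"
      if "n < k" for k
    proof (rule nth_equalityI)
      show "length (map (\<lambda>i. Dv n r (snd (HH n r f k ! (i + 1))) < Dv n r (snd (HH n r f k ! 0))) [0..<n]) = length z"
        using z by (simp add: cube_def)
      fix i assume "i < length (map (\<lambda>i. Dv n r (snd (HH n r f k ! (i + 1))) < Dv n r (snd (HH n r f k ! 0))) [0..<n])"
      then have i: "i < n" by simp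
      have "HH n r f k ! (i + 1) = (?Q (Suc i), f (?Q (Suc i)))" using HH_nth[of "i+1" k] i that by simp
      moreover have "HH n r f k ! 0 = (?Q 0, f (?Q 0))" using HH_nth[of 0 k] that by simp
      moreover have "Dv n r (f (?Q (Suc i))) = real (hdist (ev n i) z)"
        using D[OF Qc[of "Suc i"]] False i Qi[OF i] by (metis Suc_leI)
      moreover have "Dv n r (f (?Q 0)) = real (hdist (replicate n False) z)"
        using D[OF Qc[of 0]] False Q0 by (metis le0)
      ultimately show "map (\<lambda>i. Dv n r (snd (HH n r f k ! (i + 1))) < Dv n r (snd (HH n r f k ! 0))) [0..<n] ! i = z ! i"
        using i hdist_ev[of z n i] z by (simp add: cube_def)
    qed
    have "hdist s2 z = r"
      using aut_hdist[OF aut s2(1) z(1)] s2(2) z(2) hdist_sp2[of r n] r by simp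
    moreover have "s2 \<in> set (List.n_lists n [True, False])"
      using s2 by (auto simp: set_n_lists cube_def)
    ultimately have "s2 \<in> set L" by (simp add: L_def)
    then obtain m where m: "m < length L" "L ! m = s2" by (metis in_set_conv_nth)
    have "distinct L" unfolding L_def by (intro distinct_filter distinct_n_lists) simp
    then have "length L = card (set L)" by (simp add: distinct_card)
    also have "\<dots> \<le> card {y. y \<in> cube n \<and> hdist y z = r}"
      by (intro card_mono) (use finite_cube[of n] in \<open>auto simp: L_def set_n_lists cube_def\<close>)
    also have "\<dots> \<le> n choose r" using sphere_card z by (simp add: cube_def)
    finally have lL: "length L \<le> n choose r" .
    have "?Q (n + 1 + m) = L ! m"
      using zc[of "n + 1 + m"] m(1) by (simp add: alg_next_def HH_len Let_def L_def)
    then have "?Q (n + 1 + m) = s2" using m by simp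
    moreover have "n + 1 + m < t" using m(1) lL t by simp
    ultimately show ?thesis using memQ[of "n+1+m"] opt by (intro bexI[of _ "(?Q (n+1+m), f (?Q (n+1+m)))"]) auto
  qed
qed

lemma upper_time:
  assumes aut: "hypercube_aut n \<sigma>" and f: "f = (\<lambda>x. Fork n r (\<sigma> x))"
    and r: "1 \<le> r" "r < n"
  shows "expected_opt_time n (alg n r) f \<le> of_nat (n + 1 + (n choose r))"
proof -
  let ?B = "n + 1 + (n choose r)"
  let ?g = "\<lambda>t. ennreal (measure_pmf.prob (run (alg n r) f t) {h. \<forall>p\<in>set h. \<not> is_opt n f (fst p)})"
  have z: "?g t = 0" if "t \<notin> {..<?B}" for t
    using upper_found[OF aut f r, of t] that by (auto simp: run_alg)
  have "expected_opt_time n (alg n r) f = (\<Sum>t\<in>{..<?B}. ?g t)"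
    unfolding expected_opt_time_def by (rule suminf_finite) (use z in auto)
  also have "\<dots> \<le> (\<Sum>t\<in>{..<?B}. 1)"
    by (intro sum_mono) (simp add: run_alg)
  finally show ?thesis by simp
qed



definition permv :: "(nat \<Rightarrow> nat) \<Rightarrow> nat \<Rightarrow> bool list \<Rightarrow> bool list" where
  "permv \<pi> n x = map (\<lambda>i. x ! \<pi> i) [0..<n]"

lemma card_perm:
  assumes "bij_betw \<pi> {..<n} {..<n}"
  shows "card {i. i < n \<and> P (\<pi> i)} = card {j. j < n \<and> P j}"
proof -
  have inj: "inj_on \<pi> {..<n}" and im: "\<pi> ` {..<n} = {..<n}" using assms by (auto simp: bij_betw_def)
  have "inj_on \<pi> {i. i < n \<and> P (\<pi> i)}"
    by (rule inj_on_subset[OF inj]) blast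
  moreover have "\<pi> ` {i. i < n \<and> P (\<pi> i)} = {j. j < n \<and> P j}"
  proof
    show "\<pi> ` {i. i < n \<and> P (\<pi> i)} \<subseteq> {j. j < n \<and> P j}" using im by blast
    show "{j. j < n \<and> P j} \<subseteq> \<pi> ` {i. i < n \<and> P (\<pi> i)}"
    proof
      fix j assume j: "j \<in> {j. j < n \<and> P j}"
      then have "j \<in> \<pi> ` {..<n}" using im by simp
      then obtain i where "i < n" "\<pi> i = j" by blast
      then show "j \<in> \<pi> ` {i. i < n \<and> P (\<pi> i)}" using j by blast
    qed
  qed
  ultimately show ?thesis by (metis card_image)
qed

lemma perm_aut:
  assumes b: "bij_betw \<pi> {..<n} {..<n}"
  shows "hypercube_aut n (permv \<pi> n)"
proof -
  have pl: "\<And>i. i < n \<Longrightarrow> \<pi> i < n" using b by (auto simp: bij_betw_def)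
  have inj: "inj_on (permv \<pi> n) (cube n)"
  proof (rule inj_onI)
    fix x y assume x: "x \<in> cube n" and y: "y \<in> cube n" and e: "permv \<pi> n x = permv \<pi> n y"
    have "\<forall>i<n. x ! \<pi> i = y ! \<pi> i"
    proof (intro allI impI)
      fix i assume "i < n"
      then show "x ! \<pi> i = y ! \<pi> i" using arg_cong[OF e, of "\<lambda>l. l ! i"] by (simp add: permv_def)
    qed
    moreover have "\<forall>j<n. \<exists>i<n. \<pi> i = j"
    proof (intro allI impI)
      fix j assume "j < n"
      then have "j \<in> \<pi> ` {..<n}" using b by (simp add: bij_betw_def)
      then show "\<exists>i<n. \<pi> i = j" by auto
    qed
    ultimately have "\<forall>j<n. x ! j = y ! j" by metis
    then show "x = y" using x y unfolding cube_def by (intro nth_equalityI) simp_all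
  qed
  have im: "permv \<pi> n ` cube n = cube n"
  proof
    show "permv \<pi> n ` cube n \<subseteq> cube n" by (auto simp: permv_def cube_def)
    show "cube n \<subseteq> permv \<pi> n ` cube n"
    proof
      fix y assume y: "y \<in> cube n"
      let ?x = "permv (inv_into {..<n} \<pi>) n y"
      have "permv \<pi> n ?x = y"
      proof (rule nth_equalityI)
        show "length (permv \<pi> n ?x) = length y" using y by (simp add: permv_def cube_def)
        fix i assume "i < length (permv \<pi> n ?x)"
        then have i: "i < n" by (simp add: permv_def)
        have "inv_into {..<n} \<pi> (\<pi> i) = i" using b i by (simp add: bij_betw_def)
        then show "permv \<pi> n ?x ! i = y ! i" using i pl[OF i] by (simp add: permv_def)
      qed
      moreover have "?x \<in> cube n" by (simp add: permv_def cube_def)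
      ultimately show "y \<in> permv \<pi> n ` cube n" by (metis image_eqI)
    qed
  qed
  have adj: "hc_adj x y \<longleftrightarrow> hc_adj (permv \<pi> n x) (permv \<pi> n y)" if "x \<in> cube n" "y \<in> cube n" for x y
  proof -
    have "card {i. i < n \<and> (\<lambda>j. x ! j \<noteq> y ! j) (\<pi> i)} = card {j. j < n \<and> x ! j \<noteq> y ! j}"
      by (rule card_perm[OF b])
    moreover have "{i. i < length (permv \<pi> n x) \<and> permv \<pi> n x ! i \<noteq> permv \<pi> n y ! i} = {i. i < n \<and> (\<lambda>j. x ! j \<noteq> y ! j) (\<pi> i)}"
      by (auto simp: permv_def)
    ultimately show ?thesis using that unfolding hc_adj_def by (simp add: permv_def cube_def)
  qed
  show ?thesis unfolding hypercube_aut_def bij_betw_def using inj im adj by blast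
qed

lemma ones_perm:
  assumes b: "bij_betw \<pi> {..<n} {..<n}" and x: "x \<in> cube n"
  shows "ones (permv \<pi> n x) = ones x"
proof -
  have "card {i. i < n \<and> (\<lambda>j. x ! j) (\<pi> i)} = card {j. j < n \<and> x ! j}"
    by (rule card_perm[OF b])
  moreover have "{i. i < n \<and> map (\<lambda>i. x ! \<pi> i) [0..<n] ! i} = {i. i < n \<and> x ! \<pi> i}" by auto
  ultimately show ?thesis using x unfolding ones_card by (simp add: permv_def cube_def)
qed



lemma exists_pi:
  assumes S: "S \<subseteq> {r..<n}" "card S = r" and n: "2 * r \<le> n"
  shows "\<exists>\<pi>. bij_betw \<pi> {..<n} {..<n} \<and> (\<forall>i<r. \<pi> i = i) \<and> (\<forall>i<n. \<pi> i \<in> S \<longleftrightarrow> n - r \<le> i)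
     \<and> (\<forall>i<n. r \<le> \<pi> i \<longleftrightarrow> r \<le> i)"
proof -
  have fS: "finite S" using S(1) finite_subset by blast
  obtain b1 where b1: "bij_betw b1 {n-r..<n} S"
    using finite_same_card_bij[of "{n-r..<n}" S] fS S n by auto
  have "card ({r..<n} - S) = n - r - r" using S fS by (simp add: card_Diff_subset)
  then obtain b2 where b2: "bij_betw b2 {r..<n-r} ({r..<n} - S)"
    using finite_same_card_bij[of "{r..<n-r}" "{r..<n} - S"] by auto
  define p2 where "p2 = (\<lambda>x. if x \<in> {r..<n-r} then b2 x else b1 x)"
  have bp2: "bij_betw p2 ({r..<n-r} \<union> {n-r..<n}) (({r..<n} - S) \<union> S)"
    unfolding p2_def by (rule bij_betw_disjoint_Un[OF b2 b1]) auto
  define p where "p = (\<lambda>x. if x \<in> {..<r} then id x else p2 x)"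
  have bp: "bij_betw p ({..<r} \<union> ({r..<n-r} \<union> {n-r..<n})) ({..<r} \<union> (({r..<n} - S) \<union> S))"
    unfolding p_def by (rule bij_betw_disjoint_Un[OF bij_betw_id bp2]) (use S n in auto)
  have e1: "{..<r} \<union> ({r..<n-r} \<union> {n-r..<n}) = {..<n}" using n by auto
  have e2: "{..<r} \<union> (({r..<n} - S) \<union> S) = {..<n}" using n S by auto
  have bb: "bij_betw p {..<n} {..<n}" using bp e1 e2 by simp
  have p1: "\<forall>i<r. p i = i" by (simp add: p_def)
  have pS: "\<forall>i<n. p i \<in> S \<longleftrightarrow> n - r \<le> i"
  proof (intro allI impI)
    fix i assume i: "i < n"
    show "p i \<in> S \<longleftrightarrow> n - r \<le> i"
    proof (cases "i < r")
      case True then show ?thesis using S p1 n by auto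
    next
      case False
      show ?thesis
      proof (cases "i < n - r")
        case True
        then have "p i = b2 i" using False by (simp add: p_def p2_def)
        moreover have "b2 i \<in> {r..<n} - S" using b2 True False unfolding bij_betw_def by auto
        ultimately show ?thesis using True by auto
      next
        case F2: False
        then have "p i = b1 i" using False by (simp add: p_def p2_def)
        moreover have "b1 i \<in> S" using b1 F2 i unfolding bij_betw_def by auto
        ultimately show ?thesis using F2 by auto
      qed
    qed
  qed
  have pr: "\<forall>i<n. r \<le> p i \<longleftrightarrow> r \<le> i"
  proof (intro allI impI)
    fix i assume i: "i < n"
    show "r \<le> p i \<longleftrightarrow> r \<le> i"
    proof (cases "i < r")
      case True then show ?thesis using p1 by auto
    next
      case False
      have "p i \<in> {..<n}" using bb i unfolding bij_betw_def by auto
      have "\<not> p i < r"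
      proof
        assume "p i < r"
        then have "p (p i) = p i" using p1 by auto
        moreover have "p i < n" using \<open>p i \<in> _\<close> by simp
        ultimately have "p i = i" using bb i unfolding bij_betw_def inj_on_def by auto
        with \<open>p i < r\<close> False show False by simp
      qed
      then show ?thesis using False by simp
    qed
  qed
  show ?thesis using bb p1 pS pr by blast
qed



lemma pmf_run_Suc:
  "pmf (run A f (Suc t)) h0 = (if h0 = [] then 0 else pmf (run A f t) (butlast h0) *
      (if snd (last h0) = f (fst (last h0)) then pmf (A (butlast h0)) (fst (last h0)) else 0))"
proof -
  define c where "c = (if h0 \<noteq> [] \<and> snd (last h0) = f (fst (last h0)) then pmf (A (butlast h0)) (fst (last h0)) else 0)"
  have inner: "pmf (map_pmf (\<lambda>x. h @ [(x, f x)]) (A h)) h0 = c * indicator {butlast h0} h" for h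
  proof -
    have pre: "(\<lambda>x. h @ [(x, f x)]) -` {h0} =
      (if h0 \<noteq> [] \<and> h = butlast h0 \<and> snd (last h0) = f (fst (last h0)) then {fst (last h0)} else {})"
    proof (cases "h0 = []")
      case True then show ?thesis by auto
    next
      case False
      then have h0: "h0 = butlast h0 @ [last h0]" by simp
      have "h @ [(x, f x)] = h0 \<longleftrightarrow> h = butlast h0 \<and> (x, f x) = last h0" for x
        by (subst h0) (simp only: append1_eq_conv)
      then show ?thesis using False by (cases "last h0") auto
    qed
    show ?thesis unfolding pmf_map pre c_def by (auto simp: measure_pmf_single)
  qed
  have "pmf (run A f (Suc t)) h0 = measure_pmf.expectation (run A f t) (\<lambda>h. c * indicator {butlast h0} h)"
    by (simp add: pmf_bind inner)
  also have "\<dots> = c * pmf (run A f t) (butlast h0)"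
    by (simp add: measure_pmf_single)
  finally show ?thesis unfolding c_def by auto
qed

lemma run_couple:
  assumes A: "valid_alg n A" and fg: "\<And>x. x \<in> cube n \<Longrightarrow> x \<noteq> q \<Longrightarrow> f x = g x"
  shows "(\<forall>p\<in>set h0. fst p \<noteq> q) \<Longrightarrow> pmf (run A f t) h0 = pmf (run A g t) h0"
proof (induction t arbitrary: h0)
  case 0
  then show ?case by simp
next
  case (Suc t)
  show ?case
  proof (cases "h0 = []")
    case True then show ?thesis unfolding pmf_run_Suc by simp
  next
    case False
    have ih: "pmf (run A f t) (butlast h0) = pmf (run A g t) (butlast h0)"
      using Suc.prems by (intro Suc.IH) (meson in_set_butlastD)
    have lq: "fst (last h0) \<noteq> q" using Suc.prems False by simp
    show ?thesis
    proof (cases "fst (last h0) \<in> cube n")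
      case True
      then show ?thesis using fg[OF True lq] ih unfolding pmf_run_Suc by simp
    next
      case F: False
      have "pmf (A (butlast h0)) (fst (last h0)) = 0"
        using A F unfolding valid_alg_def by (meson pmf_eq_0_set_pmf subsetD)
      then show ?thesis unfolding pmf_run_Suc by simp
    qed
  qed
qed

lemma prob_couple:
  assumes A: "valid_alg n A" and fg: "\<And>x. x \<in> cube n \<Longrightarrow> x \<noteq> q \<Longrightarrow> f x = g x"
    and E: "E \<subseteq> {h. \<forall>p\<in>set h. fst p \<noteq> q}"
  shows "measure_pmf.prob (run A f t) E = measure_pmf.prob (run A g t) E"
  unfolding measure_pmf_conv_infsetsum
  by (rule infsetsum_cong) (use run_couple[OF A fg] E in auto)

lemma run_len: "h \<in> set_pmf (run A f t) \<Longrightarrow> length h = t"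
  by (induction t arbitrary: h) auto



definition gg :: "nat \<Rightarrow> nat \<Rightarrow> bool list \<Rightarrow> real" where
  "gg n r x = (if x = sp1 n r then real n + 1 else real (ones x))"

lemma fS_props:
  assumes aut: "hypercube_aut n \<sigma>" and op: "\<forall>x\<in>cube n. ones (\<sigma> x) = ones x"
    and s1: "\<sigma> (sp1 n r) = sp1 n r" and q: "q \<in> cube n" "\<sigma> q = sp2 n r" and r: "1 \<le> r" "r < n"
  shows "\<And>x. x \<in> cube n \<Longrightarrow> x \<noteq> q \<Longrightarrow> Fork n r (\<sigma> x) = gg n r x"
    and "\<And>x. is_opt n (\<lambda>x. Fork n r (\<sigma> x)) x \<Longrightarrow> x = q"
proof -
  have inj: "inj_on \<sigma> (cube n)" using aut unfolding hypercube_aut_def bij_betw_def by auto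
  have s1c: "sp1 n r \<in> cube n" using r by (simp add: cube_def len_sp)
  fix x assume x: "x \<in> cube n" "x \<noteq> q"
  have ne2: "\<sigma> x \<noteq> sp2 n r" using inj x q by (metis inj_on_def)
  show "Fork n r (\<sigma> x) = gg n r x"
  proof (cases "x = sp1 n r")
    case True then show ?thesis using s1 by (simp add: Fork_eq gg_def)
  next
    case False
    then have "\<sigma> x \<noteq> sp1 n r" using inj x s1c s1 by (metis inj_on_def)
    then show ?thesis using False ne2 op x by (simp add: Fork_eq gg_def)
  qed
next
  fix x assume o: "is_opt n (\<lambda>x. Fork n r (\<sigma> x)) x"
  have inj: "inj_on \<sigma> (cube n)" using aut unfolding hypercube_aut_def bij_betw_def by auto
  have xc: "x \<in> cube n" using o by (simp add: is_opt_def)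
  have "Fork n r (\<sigma> q) \<le> Fork n r (\<sigma> x)" using o q(1) unfolding is_opt_def by blast
  then have "real n + 2 \<le> Fork n r (\<sigma> x)" using q Fork_sp2[OF r] by simp
  then have "\<sigma> x = sp2 n r" using Fork_top aut_cube[OF aut xc] by (simp add: cube_def)
  then show "x = q" using inj xc q by (metis inj_on_def)
qed

lemma sum_bound:
  assumes fin: "finite Fam" and inj: "inj_on q Fam"
  shows "real (card Fam) - real t \<le> (\<Sum>S\<in>Fam. measure_pmf.prob (run A g t) {h. \<forall>p\<in>set h. fst p \<noteq> q S})"
proof -
  let ?G = "\<lambda>S. {h. \<forall>p\<in>set h. fst p \<noteq> q S}"
  let ?M = "run A g t"
  have ptw: "real (card Fam) - real t \<le> (\<Sum>S\<in>Fam. indicator (?G S) h)" if "length h = t" for h :: history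
  proof -
    have "(\<Sum>S\<in>Fam. indicator (?G S) h :: real) = (\<Sum>S\<in>{S\<in>Fam. h \<in> ?G S}. 1)"
      by (subst sum.inter_filter[OF fin]) (auto intro!: sum.cong simp: indicator_def)
    also have "\<dots> = real (card {S\<in>Fam. h \<in> ?G S})" by simp
    finally have e: "(\<Sum>S\<in>Fam. indicator (?G S) h :: real) = real (card {S\<in>Fam. h \<in> ?G S})" .
    have "card Fam = card {S\<in>Fam. h \<in> ?G S} + card {S\<in>Fam. h \<notin> ?G S}"
      using fin by (subst card_Un_disjoint[symmetric]) (auto intro: arg_cong[where f=card])
    moreover have "card {S\<in>Fam. h \<notin> ?G S} \<le> t"
    proof -
      have "card {S\<in>Fam. h \<notin> ?G S} \<le> card (fst ` set h)"
        by (rule card_inj_on_le[of q]) (use inj in \<open>auto simp: inj_on_def image_iff, metis fst_conv\<close>)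
      also have "\<dots> \<le> card (set h)" by (rule card_image_le) simp
      also have "\<dots> \<le> length h" by (rule card_length)
      finally show ?thesis using that by simp
    qed
    ultimately show ?thesis unfolding e by linarith
  qed
  have int: "integrable ?M (indicator (?G S) :: history \<Rightarrow> real)" for S
    by (rule measure_pmf.integrable_const_bound[where B=1]) auto
  have "(\<Sum>S\<in>Fam. measure_pmf.prob ?M (?G S)) = (\<Sum>S\<in>Fam. measure_pmf.expectation ?M (indicator (?G S)))"
    by simp
  also have "\<dots> = measure_pmf.expectation ?M (\<lambda>h. \<Sum>S\<in>Fam. indicator (?G S) h)"
    using Bochner_Integration.integral_sum[where I=Fam and M="measure_pmf ?M" and f="\<lambda>S. indicator (?G S)"] int by simp
  finally have e2: "(\<Sum>S\<in>Fam. measure_pmf.prob ?M (?G S)) = measure_pmf.expectation ?M (\<lambda>h. \<Sum>S\<in>Fam. indicator (?G S) h)" .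
  have "measure_pmf.expectation ?M (\<lambda>h. real (card Fam) - real t) \<le> measure_pmf.expectation ?M (\<lambda>h. \<Sum>S\<in>Fam. indicator (?G S) h)"
    by (rule integral_mono_AE) (use int ptw run_len in \<open>auto simp: AE_measure_pmf_iff\<close>)
  then show ?thesis using e2 by simp
qed



lemma gauss_sum: "(\<Sum>t<K. real M - real t) = real K * real M - real K * (real K - 1) / 2"
  by (induction K) (auto simp: field_simps)

lemma lower:
  assumes r: "1 \<le> r" and n: "2 * r \<le> n" and A: "valid_alg n A"
  shows "ennreal (real ((n - r) choose r) / 2) \<le> (SUP f\<in>Fork_class n r. expected_opt_time n A f)"
proof -
  have rn: "r < n" using r n by simp
  define Fam where "Fam = {S. S \<subseteq> {r..<n} \<and> card S = r}"
  define M where "M = card Fam"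
  have finF: "finite Fam" unfolding Fam_def by (rule finite_subset[of _ "Pow {r..<n}"]) auto
  have M: "M = (n - r) choose r" unfolding M_def Fam_def by (simp add: n_subsets)
  have Mpos: "M > 0" unfolding M using n by simp
  define q where "q S = map (\<lambda>j. j \<notin> S) [0..<n]" for S :: "nat set"
  have qc: "q S \<in> cube n" for S by (simp add: q_def cube_def)
  have injq: "inj_on q Fam"
  proof (rule inj_onI)
    fix S T assume S: "S \<in> Fam" and T: "T \<in> Fam" and e: "q S = q T"
    have "j \<in> S \<longleftrightarrow> j \<in> T" if "j < n" for j
      using arg_cong[OF e, of "\<lambda>l. l ! j"] that by (simp add: q_def)
    then show "S = T" using S T unfolding Fam_def by auto
  qed
  define P where "P S \<pi> \<longleftrightarrow> bij_betw \<pi> {..<n} {..<n} \<and> (\<forall>i<r. \<pi> i = i) \<and> (\<forall>i<n. \<pi> i \<in> S \<longleftrightarrow> n - r \<le> i)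
     \<and> (\<forall>i<n. r \<le> \<pi> i \<longleftrightarrow> r \<le> i)" for S \<pi>
  define pi where "pi S = (SOME \<pi>. P S \<pi>)" for S
  have Ppi: "P S (pi S)" if "S \<in> Fam" for S
  proof -
    have "\<exists>\<pi>. P S \<pi>" unfolding P_def using exists_pi[of S r n] that n by (simp add: Fam_def)
    then show ?thesis unfolding pi_def by (rule someI_ex)
  qed
  define sg where "sg S = permv (pi S) n" for S
  define fS where "fS S = (\<lambda>x. Fork n r (sg S x))" for S
  define G where "G S = {h :: history. \<forall>p\<in>set h. fst p \<noteq> q S}" for S
  define NF where "NF S = {h :: history. \<forall>p\<in>set h. \<not> is_opt n (fS S) (fst p)}" for S
  have props: "fS S \<in> Fork_class n r \<and> (\<forall>x. x \<in> cube n \<longrightarrow> x \<noteq> q S \<longrightarrow> fS S x = gg n r x)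
      \<and> G S \<subseteq> NF S" if S: "S \<in> Fam" for S
  proof -
    have b: "bij_betw (pi S) {..<n} {..<n}" and p1: "\<forall>i<r. pi S i = i"
      and pS: "\<forall>i<n. pi S i \<in> S \<longleftrightarrow> n - r \<le> i" and pr: "\<forall>i<n. r \<le> pi S i \<longleftrightarrow> r \<le> i"
      using Ppi[OF S] unfolding P_def by auto
    have pl: "\<And>i. i < n \<Longrightarrow> pi S i < n" using b by (auto simp: bij_betw_def)
    have aut: "hypercube_aut n (sg S)" unfolding sg_def by (rule perm_aut[OF b])
    have op: "\<forall>x\<in>cube n. ones (sg S x) = ones x" unfolding sg_def using ones_perm[OF b] by auto
    have s1: "sg S (sp1 n r) = sp1 n r"
    proof (rule nth_equalityI)
      show "length (sg S (sp1 n r)) = length (sp1 n r)" using rn by (simp add: sg_def permv_def len_sp)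
      fix i assume "i < length (sg S (sp1 n r))"
      then have i: "i < n" by (simp add: sg_def permv_def)
      then show "sg S (sp1 n r) ! i = sp1 n r ! i"
        using pr pl[OF i] rn by (simp add: sg_def permv_def nth_sp1)
    qed
    have s2: "sg S (q S) = sp2 n r"
    proof (rule nth_equalityI)
      show "length (sg S (q S)) = length (sp2 n r)" using rn by (simp add: sg_def permv_def len_sp)
      fix i assume "i < length (sg S (q S))"
      then have i: "i < n" by (simp add: sg_def permv_def)
      then show "sg S (q S) ! i = sp2 n r ! i"
        using pS pl[OF i] rn by (auto simp: sg_def permv_def nth_sp2 q_def)
    qed
    note fp = fS_props[OF aut op s1 qc s2 r rn]
    have "fS S \<in> Fork_class n r" unfolding Fork_class_def fS_def using aut by blast
    moreover have "\<forall>x. x \<in> cube n \<longrightarrow> x \<noteq> q S \<longrightarrow> fS S x = gg n r x"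
      using fp(1) by (simp add: fS_def)
    moreover have "G S \<subseteq> NF S"
      unfolding G_def NF_def using fp(2) by (auto simp: fS_def)
    ultimately show ?thesis by blast
  qed
  have Pt: "real M - real t \<le> (\<Sum>S\<in>Fam. measure_pmf.prob (run A (fS S) t) (NF S))" for t
  proof -
    have "real M - real t \<le> (\<Sum>S\<in>Fam. measure_pmf.prob (run A (gg n r) t) (G S))"
      unfolding M_def G_def by (rule sum_bound[OF finF injq])
    also have "\<dots> = (\<Sum>S\<in>Fam. measure_pmf.prob (run A (fS S) t) (G S))"
    proof (rule sum.cong)
      fix S assume S: "S \<in> Fam"
      show "measure_pmf.prob (run A (gg n r) t) (G S) = measure_pmf.prob (run A (fS S) t) (G S)"
        by (rule prob_couple[OF A, of "q S", symmetric]) (use props[OF S] in \<open>auto simp: G_def\<close>)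
    qed simp
    also have "\<dots> \<le> (\<Sum>S\<in>Fam. measure_pmf.prob (run A (fS S) t) (NF S))"
      by (intro sum_mono measure_pmf.finite_measure_mono) (use props in auto)
    finally show ?thesis .
  qed
  have ET: "ennreal (\<Sum>t<M. measure_pmf.prob (run A (fS S) t) (NF S)) \<le> expected_opt_time n A (fS S)" for S
  proof -
    have "ennreal (\<Sum>t<M. measure_pmf.prob (run A (fS S) t) (NF S)) = (\<Sum>t<M. ennreal (measure_pmf.prob (run A (fS S) t) (NF S)))"
      by (rule sum_ennreal[symmetric]) simp
    also have "\<dots> \<le> expected_opt_time n A (fS S)"
      unfolding expected_opt_time_def NF_def by (rule sum_le_suminf) (auto intro: summableI)
    finally show ?thesis .
  qed
  define X where "X = (SUP f\<in>Fork_class n r. expected_opt_time n A f)"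
  have "real M * real M / 2 \<le> (\<Sum>t<M. real M - real t)"
    by (simp add: gauss_sum field_simps)
  also have "\<dots> \<le> (\<Sum>t<M. \<Sum>S\<in>Fam. measure_pmf.prob (run A (fS S) t) (NF S))"
    by (intro sum_mono Pt)
  also have "\<dots> = (\<Sum>S\<in>Fam. \<Sum>t<M. measure_pmf.prob (run A (fS S) t) (NF S))"
    by (rule sum.swap)
  finally have "ennreal (real M * real M / 2) \<le> ennreal (\<Sum>S\<in>Fam. \<Sum>t<M. measure_pmf.prob (run A (fS S) t) (NF S))"
    by (rule ennreal_leI)
  also have "\<dots> = (\<Sum>S\<in>Fam. ennreal (\<Sum>t<M. measure_pmf.prob (run A (fS S) t) (NF S)))"
    by (rule sum_ennreal[symmetric]) (auto intro: sum_nonneg)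
  also have "\<dots> \<le> (\<Sum>S\<in>Fam. expected_opt_time n A (fS S))"
    by (intro sum_mono ET)
  also have "\<dots> \<le> (\<Sum>S\<in>Fam. X)"
    unfolding X_def by (intro sum_mono SUP_upper) (use props in auto)
  also have "\<dots> = of_nat M * X" by (simp add: M_def)
  finally have key: "ennreal (real M * real M / 2) \<le> of_nat M * X" .
  have "ennreal (real M / 2) \<le> X"
  proof (cases X)
    case (real x)
    then have "ennreal (real M * real M / 2) \<le> ennreal (real M * x)"
      using key by (simp add: ennreal_of_nat_eq_real_of_nat ennreal_mult)
    then have "real M * real M / 2 \<le> real M * x" using real by (simp add: ennreal_le_iff)
    then have "real M / 2 \<le> x" using Mpos by (simp add: field_simps)
    then show ?thesis using real by (simp add: ennreal_leI)
  next
    case top then show ?thesis by simp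
  qed
  then show ?thesis unfolding X_def M .
qed



theorem proposition1:
  fixes r :: nat
  assumes "r \<ge> 2"
  shows "\<exists>c1 c2 :: real. \<exists>N :: nat. c1 > 0 \<and> c2 > 0 \<and>
    (\<forall>n. n \<ge> N \<and> n \<ge> 2 * r \<longrightarrow>
       ennreal (c1 * real n ^ r) \<le> bb_complexity n (Fork_class n r) \<and>
       bb_complexity n (Fork_class n r) \<le> ennreal (c2 * real n ^ r))"
proof (intro exI conjI allI impI)
  define c1 :: real where "c1 = 1 / (2 * (2 * real r) ^ r)"
  show "c1 > 0" using assms by (simp add: c1_def)
  show "(3::real) > 0" by simp
  fix n assume nN: "0 \<le> n \<and> 2 * r \<le> n"
  then have n: "2 * r \<le> n" by simp
  have r1: "1 \<le> r" "r < n" using assms n by auto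
  have "ennreal (c1 * real n ^ r) \<le> ennreal (real ((n - r) choose r) / 2)"
  proof (rule ennreal_leI)
    have rr: "r \<le> n - r" using n by simp
    have "(real (n - r) / real r) ^ r \<le> real ((n - r) choose r)"
      using binomial_ge_n_over_k_pow_k[OF rr] by simp
    moreover have "real n / (2 * real r) \<le> real (n - r) / real r"
      using n assms by (simp add: field_simps of_nat_diff)
    then have "(real n / (2 * real r)) ^ r \<le> (real (n - r) / real r) ^ r"
      by (intro power_mono) auto
    ultimately have "(real n / (2 * real r)) ^ r \<le> real ((n - r) choose r)" by linarith
    then show "c1 * real n ^ r \<le> real ((n - r) choose r) / 2"
      by (simp add: c1_def power_divide field_simps)
  qed
  also have "\<dots> \<le> bb_complexity n (Fork_class n r)"
    unfolding bb_complexity_def by (rule INF_greatest) (use lower[OF r1(1) n] in auto)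
  finally show "ennreal (c1 * real n ^ r) \<le> bb_complexity n (Fork_class n r)" .
  have "bb_complexity n (Fork_class n r) \<le> (SUP f\<in>Fork_class n r. expected_opt_time n (alg n r) f)"
    unfolding bb_complexity_def by (rule INF_lower) (simp add: valid_alg)
  also have "\<dots> \<le> of_nat (n + 1 + (n choose r))"
    by (rule SUP_least) (use upper_time[OF _ _ r1] in \<open>auto simp: Fork_class_def\<close>)
  also have "\<dots> \<le> ennreal (3 * real n ^ r)"
  proof -
    have "n choose r \<le> n ^ r" using binomial_le_pow r1 by simp
    moreover have "n \<le> n ^ r" using r1 by (metis One_nat_def Suc_leI le0 less_imp_le_nat not_less_eq_eq self_le_power zero_less_iff_neq_zero)
    moreover have "1 \<le> n ^ r" using r1 by simp
    ultimately have "n + 1 + (n choose r) \<le> 3 * n ^ r" by linarith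
    then have "real (n + 1 + (n choose r)) \<le> 3 * real n ^ r" by (metis of_nat_le_iff of_nat_mult of_nat_numeral of_nat_power)
    then have "ennreal (real (n + 1 + (n choose r))) \<le> ennreal (3 * real n ^ r)" by (rule ennreal_leI)
    then show ?thesis by (simp only: ennreal_of_nat_eq_real_of_nat)
  qed
  finally show "bb_complexity n (Fork_class n r) \<le> ennreal (3 * real n ^ r)" .
qed

end
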